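(* If $n$ is a non-negative integer, then $$\sum_{k = 1}^n \sum_{j = 0}^{k - 1} \frac{( - 1)^j }{n - j}\binom{n}{j}^3 = \begin{cases} ( - 1)^{n/2} \binom{n}{n/2}\binom{3n/2}{n}-1,&\text{if $n$ is even;} \\ 1,&\text{if $n$ is odd.} \end{cases}$$
   Context: Empty sums are zero. *)

theory Defs
  imports Complex_Main
begin

end

theory Submission imports Defs begin

definition PP :: "real \<Rightarrow> real \<Rightarrow> real" where
 "PP n j = 58 - 207/2*j + 147/2*j^2 - 24*j^3 + 3*j^4
   + n*(392 - 1113/2*j + 297*j^2 - 66*j^3 + 9/2*j^4)
   + n^2*(1042 - 1107*j + 396*j^2 - 45*j^3) + n^3*(1364 - 966*j + 174*j^2)
   + n^4*(880 - 312*j) + 224*n^5"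

lemma PP_id: "(n+1)^2*((2*n+2)*(2*n+1))^3 + 3*(3*n+1)*(3*n+2)*(2*n+1-j)^3*(2*n+2-j)^3
   = PP n (j+1) * (2*n+2-j)^3 + PP n j * j^3"
  unfolding PP_def by algebra

lemma PP_1: "PP n 1 = ((n+1)^2+3*(3*n+1)*(3*n+2))*(2*n+1)^3"
  unfolding PP_def by (simp add: algebra_simps eval_nat_numeral)

lemma PP_last: "PP n (2*n+1) = (n+1)^2*((2*n+2)^3-1)"
  unfolding PP_def by algebra

lemma aux_frac:
  fixes x B P D y Q c :: real
  shows "(x+1)*B = P*D \<Longrightarrow> y*D = Q*c \<Longrightarrow> x+1>0 \<Longrightarrow> y>0 \<Longrightarrow> B = c*(P*Q)/((x+1)*y)"
proof -
  assume h1: "(x+1)*B = P*D" and h2: "y*D = Q*c" and p1: "x+1>0" and p2: "y>0"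
  have "B = P*D/(x+1)" using h1 p1 by (simp add: eq_divide_eq mult.commute)
  moreover have "D = Q*c/y" using h2 p2 by (simp add: eq_divide_eq mult.commute)
  ultimately show ?thesis by (simp add: ac_simps)
qed

lemma aux2:
  fixes s K L c A a m d :: real
  assumes "a \<noteq> 0" "m \<noteq> 0"
  shows "-s*K*(c*A/(a*m))^3 - s*L*(c*d/a)^3 = -s*c^3/a^3 * (K*A^3/m^3 + L*d^3)"
  using assms by (simp add: power_divide power_mult_distrib field_simps)

lemma aux3:
  fixes s c a m d U V :: real
  assumes "a \<noteq> 0" "m \<noteq> 0" "d \<noteq> 0"
  shows "-s*c^3/a^3*(V + U*a^3/m^3) = -s*(c*d/a)^3*V/d^3 - s*c^3*U/m^3"
  using assms by (simp add: power_divide power_mult_distrib field_simps)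

definition f :: "nat \<Rightarrow> nat \<Rightarrow> real" where
 "f n j = (-1)^j * real (2*n choose j)^3"

definition G :: "nat \<Rightarrow> nat \<Rightarrow> real" where
 "G n j = (if j = 0 then 0 else if j \<le> 2*n+1 then f n (j-1) * PP n j / real (2*n+2-j)^3
   else if j = 2*n+2 then - ((real n + 1)^2) else 0)"

lemma step:
  assumes "j < 2*n+3"
  shows "(real n+1)^2 * f (Suc n) j + 3*(3*real n+1)*(3*real n+2) * f n j = G n (Suc j) - G n j"
proof -
  consider "j = 0" | i where "j = Suc i" "i < 2*n" | "j = 2*n+1" | "j = 2*n+2"
    using assms by (cases j) (auto simp: less_Suc_eq)
  then show ?thesis
  proof cases
    case 1
    then show ?thesis by (simp add: G_def f_def PP_1 field_simps)
  next
    case 3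
    have g1: "G n j = PP (real n) (2*real n+1)"
      using 3 by (simp add: G_def f_def add.commute)
    have g2: "G n (Suc j) = - ((real n + 1)^2)"
      using 3 by (simp add: G_def)
    have f1: "f (Suc n) j = - ((2*real n+2)^3)"
      using 3 by (simp add: f_def algebra_simps)
    have f2: "f n j = 0"
      using 3 by (simp add: f_def)
    show ?thesis unfolding g1 g2 f1 f2 PP_last by (simp add: algebra_simps)
  next
    case 4
    then show ?thesis
      by (simp add: G_def f_def)
  next
    case (2 i)
    define N where "N = real n"
    define x where "x = real i"
    define c where "c = real (2*n choose i)"
    define s where "s = ((-1::real)^i)"
    have c1: "real (2*n choose Suc i) = c*(2*N-x)/(x+1)"
    proof -
      have "Suc i * (2*n choose Suc i) = (2*n - i) * (2*n choose i)"
        by (metis binomial_absorption binomial_absorb_comp)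
      hence "(x+1) * real (2*n choose Suc i) = (2*N-x) * c"
        using 2 unfolding x_def N_def c_def by (metis of_nat_Suc of_nat_diff of_nat_mult add.commute less_imp_le_nat mult_2 of_nat_add)
      thus ?thesis unfolding x_def by (simp add: field_simps)
    qed
    have c2: "real (2*Suc n choose Suc i) = c*((2*N+2)*(2*N+1))/((x+1)*(2*N+1-x))"
    proof -
      have a: "Suc i * (Suc (Suc (2*n)) choose Suc i) = (2*n+2) * (Suc (2*n) choose i)"
        using Suc_times_binomial[of i "Suc (2*n)"] by simp
      have b: "(Suc (2*n) - i) * (Suc (2*n) choose i) = Suc (2*n) * (2*n choose i)"
        using binomial_absorb_comp[of "Suc (2*n)" i] by (simp only: diff_Suc_1)
      have "(x+1) * real (2*Suc n choose Suc i) = (2*N+2) * real (Suc (2*n) choose i)"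
        using arg_cong[OF a, of real] unfolding x_def N_def by (simp del: binomial_Suc_Suc add: algebra_simps)
      moreover have "(2*N+1-x) * real (Suc (2*n) choose i) = (2*N+1)*c"
      proof -
        have e: "real (Suc (2*n) - i) = 2*N+1-x" using 2 unfolding x_def N_def by (simp add: of_nat_diff)
        have "real ((Suc (2*n) - i) * (Suc (2*n) choose i)) = real (Suc (2*n) * (2*n choose i))"
          using b by (rule arg_cong)
        thus ?thesis unfolding of_nat_mult e c_def N_def by simp
      qed
      moreover have "2*N+1-x > 0" using 2 unfolding x_def N_def by simp
      ultimately show ?thesis using aux_frac[of x "real (2*Suc n choose Suc i)" "2*N+2" "real (Suc (2*n) choose i)" "2*N+1-x" "2*N+1" c]
        unfolding x_def by simp
    qed
    have m: "2*N+1-x > 0" "2*N-x > 0" "x+1>0" using 2 unfolding x_def N_def by auto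
    have key: "(N+1)^2*((2*N+2)*(2*N+1))^3/(2*N+1-x)^3 + 3*(3*N+1)*(3*N+2)*(2*N-x)^3
       = PP N (x+2) + PP N (x+1) * (x+1)^3/(2*N+1-x)^3"
    proof -
      have "(N+1)^2*((2*N+2)*(2*N+1))^3 + 3*(3*N+1)*(3*N+2)*(2*N+1-(x+1))^3*(2*N+2-(x+1))^3
   = PP N ((x+1)+1) * (2*N+2-(x+1))^3 + PP N (x+1) * (x+1)^3" by (rule PP_id)
      hence "(N+1)^2*((2*N+2)*(2*N+1))^3 + 3*(3*N+1)*(3*N+2)*(2*N-x)^3*(2*N+1-x)^3
   = PP N (x+2) * (2*N+1-x)^3 + PP N (x+1) * (x+1)^3"
        by (simp add: algebra_simps)
      thus ?thesis using m by (simp add: field_simps)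
    qed
    have G1: "G n (Suc j) = -s * (c*(2*N-x)/(x+1))^3 * PP N (x+2) / (2*N-x)^3"
      using 2 c1 unfolding G_def f_def s_def N_def x_def by (simp add: of_nat_diff add.commute)
    have G0: "G n j = s * c^3 * PP N (x+1) / (2*N+1-x)^3"
      using 2 unfolding G_def f_def s_def N_def x_def c_def by (simp add: of_nat_diff add.commute)
    have L: "(real n+1)^2 * f (Suc n) j + 3*(3*real n+1)*(3*real n+2) * f n j
       = -s * (N+1)^2 * (c*((2*N+2)*(2*N+1))/((x+1)*(2*N+1-x)))^3
         - s * 3*(3*N+1)*(3*N+2) * (c*(2*N-x)/(x+1))^3"
      using 2 c1 c2 unfolding f_def s_def N_def by simp
    show ?thesis unfolding L G1 G0
    proof -
      have "-s * (N+1)^2 * (c*((2*N+2)*(2*N+1))/((x+1)*(2*N+1-x)))^3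
         - s * 3*(3*N+1)*(3*N+2) * (c*(2*N-x)/(x+1))^3
         = -s*c^3/(x+1)^3 * ((N+1)^2*((2*N+2)*(2*N+1))^3/(2*N+1-x)^3 + 3*(3*N+1)*(3*N+2)*(2*N-x)^3)"
        using aux2[where a="x+1" and m="2*N+1-x" and s=s and K="(N+1)^2" and A="(2*N+2)*(2*N+1)" and L="3*(3*N+1)*(3*N+2)" and c=c and d="2*N-x"] m by (simp add: mult.assoc)
      also have "\<dots> = -s*c^3/(x+1)^3 * (PP N (x+2) + PP N (x+1) * (x+1)^3/(2*N+1-x)^3)"
        by (simp only: key)
      also have "\<dots> = -s * (c*(2*N-x)/(x+1))^3 * PP N (x+2) / (2*N-x)^3 - s * c^3 * PP N (x+1) / (2*N+1-x)^3"
        using aux3[where a="x+1" and m="2*N+1-x" and d="2*N-x" and s=s and c=c and V="PP N (x+2)" and U="PP N (x+1)"] m by simp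
      finally show "-s * (N+1)^2 * (c*((2*N+2)*(2*N+1))/((x+1)*(2*N+1-x)))^3
         - s * 3*(3*N+1)*(3*N+2) * (c*(2*N-x)/(x+1))^3 = \<dots>" .
    qed
  qed
qed


definition S :: "nat \<Rightarrow> real" where "S n = (\<Sum>j\<le>2*n. f n j)"

lemma S_rec: "(real n+1)^2 * S (Suc n) + 3*(3*real n+1)*(3*real n+2) * S n = 0"
proof -
  have "(\<Sum>j<2*n+3. (real n+1)^2 * f (Suc n) j + 3*(3*real n+1)*(3*real n+2) * f n j)
      = (\<Sum>j<2*n+3. G n (Suc j) - G n j)"
    by (intro sum.cong refl step) simp
  also have "\<dots> = G n (2*n+3) - G n 0" by (rule sum_lessThan_telescope)
  also have "\<dots> = 0" by (simp add: G_def)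
  finally have e: "(\<Sum>j<2*n+3. (real n+1)^2 * f (Suc n) j + 3*(3*real n+1)*(3*real n+2) * f n j) = 0" .
  have a: "(\<Sum>j<2*n+3. f (Suc n) j) = S (Suc n)"
    unfolding S_def by (rule sum.cong) auto
  have b: "(\<Sum>j<2*n+3. f n j) = S n"
  proof -
    have "(\<Sum>j<2*n+3. f n j) = (\<Sum>j<Suc (2*n). f n j) + f n (2*n+1) + f n (2*n+2)"
      by (simp add: numeral_3_eq_3)
    also have "\<dots> = S n" by (simp add: S_def f_def lessThan_Suc_atMost binomial_eq_0)
    finally show ?thesis .
  qed
  show ?thesis using e unfolding sum.distrib sum_distrib_left[symmetric] a b .
qed

definition T :: "nat \<Rightarrow> nat" where "T m = (2*m choose m) * (3*m choose (2*m))"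

lemma T_fact: "T m * fact m ^ 3 = fact (3*m)"
proof -
  have 1: "fact m * fact m * (2*m choose m) = (fact (2*m) :: nat)"
    using binomial_fact_lemma[of m "2*m"] by simp
  have 2: "fact (2*m) * fact m * (3*m choose (2*m)) = (fact (3*m) :: nat)"
    using binomial_fact_lemma[of "2*m" "3*m"] by simp
  have "T m * fact m ^ 3 = (fact m * fact m * (2*m choose m)) * fact m * (3*m choose (2*m))"
    unfolding T_def by (simp add: power3_eq_cube ac_simps)
  also have "\<dots> = fact (3*m)" unfolding 1 by (rule 2)
  finally show ?thesis .
qed

lemma T_rec: "(real m+1)^2 * real (T (Suc m)) = 3*(3*real m+1)*(3*real m+2) * real (T m)"
proof -
  have e3: "3*Suc m = Suc (Suc (Suc (3*m)))" by simp
  have f3': "fact (Suc (Suc (Suc (3*m)))) = Suc (Suc (Suc (3*m))) * (Suc (Suc (3*m)) * (Suc (3*m) * (fact (3*m) :: nat)))"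
    by (simp only: fact_Suc of_nat_id)
  have f3: "fact (3 * Suc m) = (3*m+3)*(3*m+2)*(3*m+1)*(fact (3*m) :: nat)"
    unfolding e3 f3' by (simp add: algebra_simps)
  have "real (T (Suc m)) * (real m+1)^3 * real (fact m)^3 = (3*real m+3)*(3*real m+2)*(3*real m+1) * real (T m) * real (fact m)^3"
  proof -
    have "T (Suc m) * fact (Suc m)^3 = (3*m+3)*(3*m+2)*(3*m+1)*(T m * fact m ^ 3)"
      unfolding T_fact f3 by simp
    hence "real (T (Suc m) * fact (Suc m)^3) = real ((3*m+3)*(3*m+2)*(3*m+1)*(T m * fact m ^ 3))"
      by simp
    moreover have r: "real (fact (Suc m) :: nat) = (real m+1) * real (fact m :: nat)"
      by (simp add: fact_Suc algebra_simps)
    moreover have h: "(fact m + fact m * real m)^3 = (fact m::real)^3 * (1+real m)^3"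
      by (simp add: power_mult_distrib[symmetric] algebra_simps)
    ultimately show ?thesis unfolding of_nat_mult of_nat_power r
      by (simp add: power_mult_distrib algebra_simps)
  qed
  hence "real (T (Suc m)) * (real m+1)^3 = (3*real m+3)*(3*real m+2)*(3*real m+1) * real (T m)"
    by simp
  hence "(real m+1) * ((real m+1)^2 * real (T (Suc m))) = (real m+1) * (3*(3*real m+1)*(3*real m+2) * real (T m))"
    by (simp add: algebra_simps power3_eq_cube power2_eq_square)
  thus ?thesis by simp
qed

lemma S_closed: "S m = (-1)^m * real (T m)"
proof (induction m)
  case 0
  then show ?case by (simp add: S_def f_def T_def)
next
  case (Suc m)
  have "(real m+1)^2 * S (Suc m) = - (3*(3*real m+1)*(3*real m+2) * S m)"
    using S_rec[of m] by linarith
  also have "\<dots> = - ((-1)^m * (3*(3*real m+1)*(3*real m+2) * real (T m)))"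
    using Suc by simp
  also have "\<dots> = - ((-1)^m * ((real m+1)^2 * real (T (Suc m))))"
    using T_rec[of m] by simp
  also have "\<dots> = (real m+1)^2 * ((-1)^(Suc m) * real (T (Suc m)))" by simp
  finally have eq: "(real m+1)^2 * S (Suc m) = (real m+1)^2 * ((-1)^(Suc m) * real (T (Suc m)))" .
  have nz: "(real m+1)^2 \<noteq> 0" by simp
  show ?case using mult_left_cancel[OF nz, THEN iffD1, OF eq] .
qed

lemma dsum: "(\<Sum>k=1..n. \<Sum>j=0..k-1. g j) = (\<Sum>j<n. real (n-j) * (g j :: real))"
proof (induction n)
  case 0 then show ?case by simp
next
  case (Suc n)
  have "(\<Sum>k=1..Suc n. \<Sum>j=0..k-1. g j) = (\<Sum>j<n. real (n-j) * g j) + (\<Sum>j<Suc n. g j)"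
    using Suc by (simp add: atLeast0AtMost lessThan_Suc_atMost)
  also have "\<dots> = (\<Sum>j<Suc n. real (Suc n-j) * g j)"
    by (simp add: sum.distrib[symmetric] Suc_diff_le algebra_simps)
  finally show ?case .
qed

definition D :: "nat \<Rightarrow> real" where "D n = (\<Sum>j\<le>n. (-1)^j * real (n choose j)^3)"

lemma D_odd: assumes "odd n" shows "D n = 0"
proof -
  have "D n = (\<Sum>j=0..n. (-1)^(n-j) * real (n choose (n-j))^3)"
    unfolding D_def atMost_atLeast0 by (subst sum.atLeastAtMost_rev) simp
  also have "\<dots> = (\<Sum>j=0..n. - ((-1)^j * real (n choose j)^3))"
  proof (rule sum.cong)
    fix j assume "j \<in> {0..n}"
    hence j: "j \<le> n" by simp
    have "(-1::real)^(n-j) = - ((-1)^j)"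
    proof (cases "even j")
      case True
      hence "odd (n-j)" using assms j by (simp add: even_diff_nat)
      thus ?thesis using True by simp
    next
      case False
      hence "even (n-j)" using assms j by (simp add: even_diff_nat)
      thus ?thesis using False by simp
    qed
    thus "(-1)^(n-j) * real (n choose (n-j))^3 = - ((-1)^j * real (n choose j)^3)"
      using j by (simp add: binomial_symmetric[symmetric])
  qed simp
  also have "\<dots> = - D n" unfolding D_def atMost_atLeast0 by (simp add: sum_negf)
  finally show ?thesis by simp
qed

theorem proposition18:
  fixes n :: nat
  shows "(\<Sum>k=1..n. \<Sum>j=0..k-1. (-1)^j / real (n - j) * real (n choose j) ^ 3) =
    (if even n then (-1)^(n div 2) * real (n choose (n div 2)) * real ((3 * n div 2) choose n) - 1
     else 1)"
proof -
  have "(\<Sum>k=1..n. \<Sum>j=0..k-1. (-1)^j / real (n - j) * real (n choose j) ^ 3)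
      = (\<Sum>j<n. real (n-j) * ((-1)^j / real (n - j) * real (n choose j) ^ 3))"
    by (rule dsum)
  also have "\<dots> = (\<Sum>j<n. (-1)^j * real (n choose j) ^ 3)"
    by (rule sum.cong) auto
  also have "\<dots> = D n - (-1)^n"
    unfolding D_def by (simp add: lessThan_Suc_atMost[symmetric])
  finally have L: "(\<Sum>k=1..n. \<Sum>j=0..k-1. (-1)^j / real (n - j) * real (n choose j) ^ 3) = D n - (-1)^n" .
  show ?thesis
  proof (cases "even n")
    case True
    then obtain m where m: "n = 2*m" by auto
    have "D n = S m" unfolding D_def S_def f_def m ..
    moreover have "3 * n div 2 = 3*m" "n div 2 = m" using m by auto
    ultimately show ?thesis using L True S_closed[of m] m
      by (simp add: T_def mult.commute mult.left_commute)
  next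
    case False
    then show ?thesis using L D_odd by simp
  qed
qed

end
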